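(* In the standing setting of the context, assume $d_1>d_4$ and that every ball $B(x,r)$ is relatively compact in $M$. For $x,x_0\in M$, $r,t>0$ and $\theta>1$ let $R(x,r,t,\theta)=\mathbb{P}^x\big(d(X_s,x_0)\le r\text{ for some }s\in(t,\theta t]\big)$. There exist constants $c_1,c_2>0$ such that for all $r>0$, $t\ge\phi(r)$, $\theta\ge c_1$ and all $x,x_0\in M$ with $d(x,x_0)\le r$, $$R(x,r,t,\theta)\ge c_2\frac{V(r)}{\phi(r)}\,\frac{t}{V(\phi^{-1}(t))}.$$
   Context: Standing setting: $(M,d)$ is a locally compact separable metric space, $\mu$ a positive Radon measure on $M$ with full support, $(\mathcal{E},\mathcal{F})$ a regular Dirichlet form on $L^2(M;\mu)$ (no killing part), and $X=(\{X_t\},\{\mathbb P^x\})$ the associated $\mu$-symmetric Hunt process. $V,\phi$ are increasing functions on $(0,\infty)$, $\phi^{-1}$ the inverse of $\phi$, with constants $c_i,d_i>0$ ($i=1,\dots,4$) such that $c_1(R/r)^{d_1}\le V(R)/V(r)\le c_2(R/r)^{d_2}$ and $c_3(R/r)^{d_3}\le\phi(R)/\phi(r)\le c_4(R/r)^{d_4}$ for all $0<r<R<\infty$. $X$ has a symmetric heat kernel $p(t,x,y)$ defined for all $x,y\in M$, $t>0$, with $p(t,x,y)\asymp\frac{1}{V(\phi^{-1}(t))}\wedge\frac{t}{V(d(x,y))\phi(d(x,y))}$ for all $x,y,t$ (comparison constants independent of $x,y,t$). *)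

theory Defs
  imports "HOL-Probability.Probability"
begin

text \<open>The cemetery state Delta is represented by None, points of M by Some y.\<close>

definition borelD :: "'a::topological_space option measure" where
  "borelD = sigma UNIV (insert {None} ((\<lambda>A. Some ` A) ` sets borel))"

text \<open>Convergence in M_Delta (one-point compactification topology; if M is
  compact, Delta is isolated, which is also what this says).\<close>

definition tendstoD :: "('b \<Rightarrow> 'a::metric_space option) \<Rightarrow> 'b filter \<Rightarrow> 'a option \<Rightarrow> bool" where
  "tendstoD f F L = (case L of
      Some y \<Rightarrow> eventually (\<lambda>s. f s \<noteq> None) F \<and> ((\<lambda>s. the (f s)) \<longlongrightarrow> y) F
    | None \<Rightarrow> (\<forall>K. compact K \<longrightarrow> eventually (\<lambda>s. f s \<notin> Some ` K) F))"

definition natF :: "'w set \<Rightarrow> (real \<Rightarrow> 'w \<Rightarrow> 'a::topological_space option) \<Rightarrow> ennreal \<Rightarrow> 'w measure" where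
  "natF \<Omega> X t = sigma \<Omega> {X u -` B \<inter> \<Omega> | u B. 0 \<le> u \<and> ennreal u \<le> t \<and> B \<in> sets borelD}"

text \<open>Augmented filtration F_t = intersection over all initial distributions nu
  of the P_nu-completions of F^0_t, where P_nu = integral of P^x nu(dx).\<close>

definition augF_sets :: "'w set \<Rightarrow> (real \<Rightarrow> 'w \<Rightarrow> 'a::topological_space option) \<Rightarrow> ('a \<Rightarrow> 'w measure)
    \<Rightarrow> ennreal \<Rightarrow> 'w set set" where
  "augF_sets \<Omega> X P t = {A. A \<subseteq> \<Omega> \<and>
     (\<forall>\<nu>::'a measure. prob_space \<nu> \<and> sets \<nu> = sets borel \<longrightarrow>
        (\<exists>A' \<in> sets (natF \<Omega> X t). \<exists>N \<in> sets (natF \<Omega> X \<infinity>).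
            (A - A') \<union> (A' - A) \<subseteq> N \<and> (\<integral>\<^sup>+ x. emeasure (P x) N \<partial>\<nu>) = 0))}"

definition augF :: "'w set \<Rightarrow> (real \<Rightarrow> 'w \<Rightarrow> 'a::topological_space option) \<Rightarrow> ('a \<Rightarrow> 'w measure)
    \<Rightarrow> ennreal \<Rightarrow> 'w measure" where
  "augF \<Omega> X P t = sigma \<Omega> (augF_sets \<Omega> X P t)"

definition pre_tau :: "(ennreal \<Rightarrow> 'w measure) \<Rightarrow> ('w \<Rightarrow> ennreal) \<Rightarrow> 'w set set" where
  "pre_tau F \<tau> = {A \<in> sets (F \<infinity>). \<forall>t. {\<omega> \<in> A. \<tau> \<omega> \<le> t} \<in> sets (F t)}"

text \<open>Transition probability from a point of M_Delta (Delta is a trap).\<close>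

definition transD :: "'w set \<Rightarrow> (real \<Rightarrow> 'w \<Rightarrow> 'a option) \<Rightarrow> ('a \<Rightarrow> 'w measure)
    \<Rightarrow> real \<Rightarrow> 'a option set \<Rightarrow> 'a option \<Rightarrow> ennreal" where
  "transD \<Omega> X P s B z = (case z of
      None \<Rightarrow> indicator B None
    | Some y \<Rightarrow> emeasure (P y) {\<omega> \<in> \<Omega>. X s \<omega> \<in> B})"

section \<open>Hunt processes (Fukushima--Oshima--Takeda, Appendix A.2)\<close>

definition hunt_process :: "'w set \<Rightarrow> (real \<Rightarrow> 'w \<Rightarrow> 'a::metric_space option) \<Rightarrow> ('a \<Rightarrow> 'w measure) \<Rightarrow> bool" where
  "hunt_process \<Omega> X P \<longleftrightarrow>
     \<comment> \<open>probability measures on the natural sigma-algebra F^0_infinity\<close>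
     (\<forall>x. prob_space (P x) \<and> space (P x) = \<Omega> \<and> sets (P x) = sets (natF \<Omega> X \<infinity>)) \<and>
     (\<forall>A \<in> sets (natF \<Omega> X \<infinity>). (\<lambda>x. emeasure (P x) A) \<in> borel_measurable borel) \<and>
     \<comment> \<open>normality\<close>
     (\<forall>x. emeasure (P x) {\<omega> \<in> \<Omega>. X 0 \<omega> = Some x} = 1) \<and>
     \<comment> \<open>path regularity: right continuous, left limits in M_Delta, Delta absorbing\<close>
     (\<forall>\<omega> \<in> \<Omega>.
        (\<forall>t \<ge> 0. tendstoD (\<lambda>s. X s \<omega>) (at_right t) (X t \<omega>)) \<and>
        (\<forall>t > 0. \<exists>L. tendstoD (\<lambda>s. X s \<omega>) (at_left t) L) \<and>
        (\<forall>t s. 0 \<le> t \<longrightarrow> t \<le> s \<longrightarrow> X t \<omega> = None \<longrightarrow> X s \<omega> = None)) \<and>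
     \<comment> \<open>strong Markov property w.r.t. the augmented filtration\<close>
     (\<forall>\<tau>. stopping_time (augF \<Omega> X P) \<tau> \<longrightarrow>
        (\<forall>A \<in> pre_tau (augF \<Omega> X P) \<tau>. \<forall>s \<ge> 0. \<forall>B \<in> sets borelD. \<forall>x.
           emeasure (completion (P x))
             {\<omega> \<in> A. \<tau> \<omega> < \<infinity> \<and> X (enn2real (\<tau> \<omega>) + s) \<omega> \<in> B}
           = (\<integral>\<^sup>+ \<omega>. indicator {\<omega> \<in> A. \<tau> \<omega> < \<infinity>} \<omega> *
                 transD \<Omega> X P s B (X (enn2real (\<tau> \<omega>)) \<omega>) \<partial>completion (P x)))) \<and>
     \<comment> \<open>quasi-left continuity\<close>
     (\<forall>\<tau>s \<tau>. (\<forall>n. stopping_time (augF \<Omega> X P) (\<tau>s n)) \<and> (\<forall>\<omega>. incseq (\<lambda>n. \<tau>s n \<omega>)) \<and>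
        (\<forall>\<omega>. (\<lambda>n. \<tau>s n \<omega>) \<longlonglongrightarrow> \<tau> \<omega>) \<longrightarrow>
        (\<forall>x. AE \<omega> in P x. \<tau> \<omega> < \<infinity> \<longrightarrow>
             tendstoD (\<lambda>n. X (enn2real (\<tau>s n \<omega>)) \<omega>) sequentially (X (enn2real (\<tau> \<omega>)) \<omega>)))"

definition heat_kernel_of :: "'w set \<Rightarrow> (real \<Rightarrow> 'w \<Rightarrow> 'a::metric_space option) \<Rightarrow> ('a \<Rightarrow> 'w measure)
    \<Rightarrow> 'a measure \<Rightarrow> (real \<Rightarrow> 'a \<Rightarrow> 'a \<Rightarrow> real) \<Rightarrow> bool" where
  "heat_kernel_of \<Omega> X P \<mu> p \<longleftrightarrow>
     (\<forall>t > 0. \<forall>x y. 0 \<le> p t x y \<and> p t x y = p t y x) \<and>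
     (\<forall>t > 0. \<forall>x. (\<lambda>y. p t x y) \<in> borel_measurable borel) \<and>
     (\<forall>t > 0. \<forall>x. \<forall>A \<in> sets borel.
        emeasure (P x) {\<omega> \<in> \<Omega>. X t \<omega> \<in> Some ` A} = (\<integral>\<^sup>+ y \<in> A. ennreal (p t x y) \<partial>\<mu>))"

text \<open>L2 functions, transition semigroup P_t, and the Dirichlet form of the
  (symmetric) semigroup: E(u,v) = lim_{t->0+} (1/t)(u - P_t u, v),
  F = {u in L2 : the limit exists} (Fukushima et al., Lemma 1.3.4).\<close>

definition L2 :: "'a::topological_space measure \<Rightarrow> ('a \<Rightarrow> real) set" where
  "L2 \<mu> = {f. f \<in> borel_measurable \<mu> \<and> integrable \<mu> (\<lambda>x. (f x)\<^sup>2)}"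

definition semigroup :: "'a measure \<Rightarrow> (real \<Rightarrow> 'a \<Rightarrow> 'a \<Rightarrow> real) \<Rightarrow> real \<Rightarrow> ('a \<Rightarrow> real) \<Rightarrow> 'a \<Rightarrow> real" where
  "semigroup \<mu> p t f x = (\<integral> y. p t x y * f y \<partial>\<mu>)"

definition approx_form :: "'a measure \<Rightarrow> (real \<Rightarrow> 'a \<Rightarrow> 'a \<Rightarrow> real) \<Rightarrow> real \<Rightarrow> ('a \<Rightarrow> real) \<Rightarrow> ('a \<Rightarrow> real) \<Rightarrow> real" where
  "approx_form \<mu> p t u v = (1 / t) * (\<integral> x. (u x - semigroup \<mu> p t u x) * v x \<partial>\<mu>)"

definition form_domain :: "'a::topological_space measure \<Rightarrow> (real \<Rightarrow> 'a \<Rightarrow> 'a \<Rightarrow> real) \<Rightarrow> ('a \<Rightarrow> real) set" where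
  "form_domain \<mu> p = {u \<in> L2 \<mu>. \<exists>L. ((\<lambda>t. approx_form \<mu> p t u u) \<longlongrightarrow> L) (at_right 0)}"

definition form :: "'a measure \<Rightarrow> (real \<Rightarrow> 'a \<Rightarrow> 'a \<Rightarrow> real) \<Rightarrow> ('a \<Rightarrow> real) \<Rightarrow> ('a \<Rightarrow> real) \<Rightarrow> real" where
  "form \<mu> p u v = Lim (at_right 0) (\<lambda>t. approx_form \<mu> p t u v)"

definition Cc :: "('a::metric_space \<Rightarrow> real) set" where
  "Cc = {f. continuous_on UNIV f \<and> compact (closure {x. f x \<noteq> 0})}"

text \<open>The Dirichlet form of p: P_t strongly continuous on L2, regular, and without
  killing part (killing measure k = vague limit of (1/t)(1 - P_t 1) mu vanishes).\<close>

definition regular_no_killing :: "'a::metric_space measure \<Rightarrow> (real \<Rightarrow> 'a \<Rightarrow> 'a \<Rightarrow> real) \<Rightarrow> bool" where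
  "regular_no_killing \<mu> p \<longleftrightarrow>
     (\<forall>f \<in> L2 \<mu>. ((\<lambda>t. \<integral> x. (semigroup \<mu> p t f x - f x)\<^sup>2 \<partial>\<mu>) \<longlongrightarrow> 0) (at_right 0)) \<and>
     (\<forall>g \<in> Cc. \<forall>\<epsilon> > 0. \<exists>f \<in> form_domain \<mu> p \<inter> Cc. \<forall>x. \<bar>f x - g x\<bar> \<le> \<epsilon>) \<and>
     (\<forall>g \<in> form_domain \<mu> p. \<forall>\<epsilon> > 0. \<exists>f \<in> form_domain \<mu> p \<inter> Cc.
        form \<mu> p (\<lambda>x. g x - f x) (\<lambda>x. g x - f x) + (\<integral> x. (g x - f x)\<^sup>2 \<partial>\<mu>) < \<epsilon>) \<and>
     (\<forall>u \<in> form_domain \<mu> p \<inter> Cc.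
        ((\<lambda>t. (1 / t) * (\<integral> x. (u x)\<^sup>2 * (1 - (\<integral> y. p t x y \<partial>\<mu>)) \<partial>\<mu>)) \<longlongrightarrow> 0) (at_right 0))"

definition hk_profile :: "(real \<Rightarrow> real) \<Rightarrow> (real \<Rightarrow> real) \<Rightarrow> (real \<Rightarrow> real) \<Rightarrow> real \<Rightarrow> 'a::metric_space \<Rightarrow> 'a \<Rightarrow> real" where
  "hk_profile V \<phi> \<phi>inv t x y =
     (if x = y then 1 / V (\<phi>inv t)
      else min (1 / V (\<phi>inv t)) (t / (V (dist x y) * \<phi> (dist x y))))"

text \<open>R(x,r,t,theta) = P^x(d(X_s,x0) <= r for some s in (t, theta t]), taken as
  inner probability (sup of P^x(A) over measurable A contained in the event).\<close>

definition hit_event :: "'w set \<Rightarrow> (real \<Rightarrow> 'w \<Rightarrow> 'a::metric_space option) \<Rightarrow> 'a \<Rightarrow> real \<Rightarrow> real \<Rightarrow> real \<Rightarrow> 'w set" where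
  "hit_event \<Omega> X x0 r t \<theta> = {\<omega> \<in> \<Omega>. \<exists>s. t < s \<and> s \<le> \<theta> * t \<and>
      (case X s \<omega> of None \<Rightarrow> False | Some y \<Rightarrow> dist y x0 \<le> r)}"

definition R_hit :: "'w set \<Rightarrow> (real \<Rightarrow> 'w \<Rightarrow> 'a::metric_space option) \<Rightarrow> ('a \<Rightarrow> 'w measure)
    \<Rightarrow> 'a \<Rightarrow> 'a \<Rightarrow> real \<Rightarrow> real \<Rightarrow> real \<Rightarrow> real" where
  "R_hit \<Omega> X P x0 x r t \<theta> =
     Sup {measure (P x) A | A. A \<in> sets (P x) \<and> A \<subseteq> hit_event \<Omega> X x0 r t \<theta>}"

end

theory Submission
  imports Defs
begin


lemma gen_natF:
  "{X u -` B \<inter> \<Omega> | u B. 0 \<le> u \<and> ennreal u \<le> t \<and> B \<in> sets borelD} \<subseteq> Pow \<Omega>"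
  by auto

lemma space_natF[simp]: "space (natF \<Omega> X t) = \<Omega>"
  unfolding natF_def by (rule space_measure_of) (rule gen_natF)

lemma sets_natF: "sets (natF \<Omega> X t) = sigma_sets \<Omega> {X u -` B \<inter> \<Omega> | u B. 0 \<le> u \<and> ennreal u \<le> t \<and> B \<in> sets borelD}"
  unfolding natF_def by (rule sets_measure_of) (rule gen_natF)

lemma natF_mono: "t1 \<le> t2 \<Longrightarrow> sets (natF \<Omega> X t1) \<subseteq> sets (natF \<Omega> X t2)"
  unfolding sets_natF by (rule sigma_sets_mono') (auto intro: order_trans)

lemma Some_borelD: "(B::'a::topological_space set) \<in> sets borel \<Longrightarrow> Some ` B \<in> sets borelD"
  unfolding borelD_def by (subst sets_measure_of) auto

lemma natF_event:
  assumes "0 \<le> u" "ennreal u \<le> t" "B \<in> sets borel"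
  shows "{\<omega> \<in> \<Omega>. X u \<omega> \<in> Some ` B} \<in> sets (natF \<Omega> X t)"
proof -
  have "{\<omega> \<in> \<Omega>. X u \<omega> \<in> Some ` B} = X u -` (Some ` B) \<inter> \<Omega>" by auto
  also have "\<dots> \<in> sets (natF \<Omega> X t)"
    unfolding sets_natF using assms Some_borelD[OF assms(3)]
    by (intro sigma_sets.Basic) blast
  finally show ?thesis .
qed

lemma natF_augF:
  assumes "A \<in> sets (natF \<Omega> X t)"
  shows "A \<in> sets (augF \<Omega> X P t)"
proof -
  have sub: "augF_sets \<Omega> X P t \<subseteq> Pow \<Omega>" unfolding augF_sets_def by auto
  have AO: "A \<subseteq> \<Omega>" using sets.sets_into_space[OF assms] by simp
  have "A \<in> augF_sets \<Omega> X P t"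
    unfolding augF_sets_def
  proof (safe)
    fix x assume "x \<in> A" then show "x \<in> \<Omega>" using AO by auto
  next
    fix \<nu>
    show "\<exists>A'\<in>sets (natF \<Omega> X t). \<exists>N\<in>sets (natF \<Omega> X \<infinity>). A - A' \<union> (A' - A) \<subseteq> N \<and> (\<integral>\<^sup>+ x. emeasure (P x) N \<partial>\<nu>) = 0"
      using assms by (intro bexI[of _ A] bexI[of _ "{}"]) auto
  qed
  then show ?thesis unfolding augF_def using sub by (subst sets_measure_of) auto
qed

lemma markov_step:
  assumes hunt: "hunt_process \<Omega> X P" and u: "0 \<le> u" and s: "0 \<le> s" and Bs: "Bs \<in> sets borel"
    and A: "A \<in> sets (natF \<Omega> X (ennreal u))"
  shows "emeasure (P x) (A \<inter> {\<omega>\<in>\<Omega>. X (u+s) \<omega> \<in> Some ` Bs})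
         = (\<integral>\<^sup>+ \<omega>. indicator A \<omega> * transD \<Omega> X P s (Some ` Bs) (X u \<omega>) \<partial>P x)"
proof -
  define \<tau> where "\<tau> = (\<lambda>\<omega>::'a. ennreal u)"
  note SM = hunt[unfolded hunt_process_def, THEN conjunct2, THEN conjunct2, THEN conjunct2, THEN conjunct2, THEN conjunct1]
  have st: "stopping_time (augF \<Omega> X P) (\<lambda>_. ennreal u)" by (rule stopping_time_const)
  have Ainf: "A \<in> sets (natF \<Omega> X \<infinity>)" using natF_mono[of "ennreal u" \<infinity>] A by auto
  have pre: "A \<in> pre_tau (augF \<Omega> X P) (\<lambda>_. ennreal u)"
    unfolding pre_tau_def
  proof (safe)
    show "A \<in> sets (augF \<Omega> X P \<infinity>)" using Ainf by (rule natF_augF)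
    fix t :: ennreal
    show "{\<omega> \<in> A. ennreal u \<le> t} \<in> sets (augF \<Omega> X P t)"
    proof (cases "ennreal u \<le> t")
      case True
      then have "A \<in> sets (natF \<Omega> X t)" using natF_mono[of "ennreal u" t] A by auto
      then show ?thesis using True by (simp add: natF_augF)
    next
      case False then show ?thesis by simp
    qed
  qed
  have sBs: "Some ` Bs \<in> sets borelD" using Bs by (rule Some_borelD)
  have eq: "emeasure (completion (P x)) {\<omega> \<in> A. ennreal u < \<infinity> \<and> X (enn2real (ennreal u) + s) \<omega> \<in> Some ` Bs}
      = (\<integral>\<^sup>+ \<omega>. indicator {\<omega> \<in> A. ennreal u < \<infinity>} \<omega> *
                 transD \<Omega> X P s (Some ` Bs) (X (enn2real (ennreal u)) \<omega>) \<partial>completion (P x))"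
    using SM st pre s sBs by blast
  have PX: "sets (P x) = sets (natF \<Omega> X \<infinity>)" using hunt unfolding hunt_process_def by blast
  have A_sub: "A \<subseteq> \<Omega>" using sets.sets_into_space[OF A] by simp
  have set_eq: "{\<omega> \<in> A. ennreal u < \<infinity> \<and> X (enn2real (ennreal u) + s) \<omega> \<in> Some ` Bs}
     = A \<inter> {\<omega>\<in>\<Omega>. X (u+s) \<omega> \<in> Some ` Bs}" using u A_sub by auto
  have meas: "A \<inter> {\<omega>\<in>\<Omega>. X (u+s) \<omega> \<in> Some ` Bs} \<in> sets (P x)"
    unfolding PX using Ainf natF_event[of "u+s" \<infinity> Bs \<Omega> X] u s Bs by auto
  show ?thesis
    using eq unfolding set_eq using u
    by (simp add: nn_integral_completion meas main_part_sets)
qed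



locale scales =
  fixes V \<phi> :: "real \<Rightarrow> real" and c1 c2 c3 c4 d1 d2 d3 d4 :: real
  assumes V_pos: "\<And>r. r > 0 \<Longrightarrow> V r > 0"
    and V_mono: "mono_on {0<..} V"
    and phi_mono: "strict_mono_on {0<..} \<phi>"
    and phi_onto: "\<phi> ` {0<..} = {0<..}"
    and consts_pos: "c1 > 0" "c2 > 0" "c3 > 0" "c4 > 0" "d1 > 0" "d2 > 0" "d3 > 0" "d4 > 0"
    and V_scale: "\<And>r R. 0 < r \<Longrightarrow> r < R \<Longrightarrow>
                    c1 * (R / r) powr d1 \<le> V R / V r \<and> V R / V r \<le> c2 * (R / r) powr d2"
    and phi_scale: "\<And>r R. 0 < r \<Longrightarrow> r < R \<Longrightarrow>
                    c3 * (R / r) powr d3 \<le> \<phi> R / \<phi> r \<and> \<phi> R / \<phi> r \<le> c4 * (R / r) powr d4"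
    and d1_gt_d4: "d1 > d4"
begin

definition "\<psi> = the_inv_into {0<..} \<phi>"

lemma inj_phi: "inj_on \<phi> {0<..}"
  using phi_mono strict_mono_on_imp_inj_on by blast

lemma phi_pos: "r > 0 \<Longrightarrow> \<phi> r > 0"
  using phi_onto by auto

lemma psi_pos: "t > 0 \<Longrightarrow> \<psi> t > 0"
  unfolding \<psi>_def using the_inv_into_into[OF inj_phi, of t "{0<..}"] phi_onto by auto

lemma phi_psi: "t > 0 \<Longrightarrow> \<phi> (\<psi> t) = t"
  unfolding \<psi>_def using f_the_inv_into_f[OF inj_phi, of t] phi_onto by auto

lemma psi_phi: "r > 0 \<Longrightarrow> \<psi> (\<phi> r) = r"
  unfolding \<psi>_def using the_inv_into_f_f[OF inj_phi, of r] by auto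

lemma phi_le_iff: assumes "0 < a" "0 < b" shows "\<phi> a \<le> \<phi> b \<longleftrightarrow> a \<le> b"
proof -
  have "a < b \<Longrightarrow> \<phi> a < \<phi> b" "b < a \<Longrightarrow> \<phi> b < \<phi> a"
    using phi_mono assms by (auto simp: strict_mono_on_def)
  then show ?thesis by (cases a b rule: linorder_cases) auto
qed

lemma psi_mono: "0 < s \<Longrightarrow> s \<le> t \<Longrightarrow> \<psi> s \<le> \<psi> t"
  using phi_le_iff[of "\<psi> s" "\<psi> t"] psi_pos phi_psi by auto

lemma psi_ge: "0 < r \<Longrightarrow> \<phi> r \<le> t \<Longrightarrow> r \<le> \<psi> t"
  using psi_mono[of "\<phi> r" t] psi_phi phi_pos by auto

lemma Vmono: "0 < a \<Longrightarrow> a \<le> b \<Longrightarrow> V a \<le> V b"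
  using V_mono unfolding mono_on_def by auto

lemma V_up: assumes "0 < r" "r \<le> R" shows "V R \<le> max 1 c2 * (R/r) powr d2 * V r"
proof (cases "r = R")
  case True then show ?thesis using V_pos[OF assms(1)] assms by simp
next
  case False
  then have "V R / V r \<le> c2 * (R / r) powr d2" using V_scale assms by auto
  also have "\<dots> \<le> max 1 c2 * (R / r) powr d2" by (intro mult_right_mono) auto
  finally show ?thesis using V_pos[OF assms(1)] by (simp add: field_simps)
qed

lemma V_low: assumes "0 < r" "r < R" shows "c1 * (R/r) powr d1 * V r \<le> V R"
  using V_scale[OF assms] V_pos[OF assms(1)] by (simp add: field_simps)

lemma phi_low: assumes "0 < r" "r < R" shows "c3 * (R/r) powr d3 * \<phi> r \<le> \<phi> R"
  using phi_scale[OF assms] phi_pos[OF assms(1)] by (simp add: field_simps)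

lemma phi_up: assumes "0 < r" "r < R" shows "\<phi> R \<le> c4 * (R/r) powr d4 * \<phi> r"
  using phi_scale[OF assms] phi_pos[OF assms(1)] by (simp add: field_simps)

lemma V_double: "0 < t \<Longrightarrow> t < t' \<Longrightarrow> t' \<le> 2 * t \<Longrightarrow> True" by simp

lemma psi_double: "\<exists>K>0. \<forall>t>0. \<forall>t'. t \<le> t' \<longrightarrow> t' \<le> 2 * t \<longrightarrow> V (\<psi> t') \<le> K * V (\<psi> t)"
proof -
  define L where "L = max 2 ((2/c3) powr (1/d3))"
  have L1: "L > 1" unfolding L_def by auto
  have "(2/c3) = ((2/c3) powr (1/d3)) powr d3"
    using consts_pos by (simp add: powr_powr)
  also have "\<dots> \<le> L powr d3" unfolding L_def using consts_pos by (intro powr_mono2) auto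
  finally have Ld3: "2 \<le> c3 * L powr d3" using consts_pos by (simp add: field_simps)
  define K where "K = max 1 c2 * L powr d2"
  have Kpos: "K > 0" unfolding K_def using L1 by auto
  have "V (\<psi> t') \<le> K * V (\<psi> t)" if t: "t > 0" "t \<le> t'" "t' \<le> 2 * t" for t t'
  proof -
    define \<rho> where "\<rho> = \<psi> t"
    have \<rho>: "\<rho> > 0" "\<phi> \<rho> = t" unfolding \<rho>_def using psi_pos phi_psi t by auto
    have "c3 * ((L*\<rho>)/\<rho>) powr d3 * \<phi> \<rho> \<le> \<phi> (L*\<rho>)" using phi_low[of \<rho> "L*\<rho>"] \<rho> L1 by auto
    moreover have "(L*\<rho>)/\<rho> = L" using \<rho> by simp
    moreover have "2 * t \<le> c3 * L powr d3 * t" using mult_right_mono[OF Ld3, of t] t by simp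
    ultimately have "2 * t \<le> \<phi> (L*\<rho>)" using \<rho> by simp
    then have "\<psi> t' \<le> L * \<rho>" using psi_mono[of t' "\<phi> (L*\<rho>)"] psi_phi[of "L*\<rho>"] \<rho> L1 t by auto
    then have "V (\<psi> t') \<le> V (L * \<rho>)" using Vmono psi_pos t by auto
    also have "\<dots> \<le> max 1 c2 * ((L*\<rho>)/\<rho>) powr d2 * V \<rho>" using V_up[of \<rho> "L*\<rho>"] \<rho> L1 by auto
    also have "\<dots> = K * V (\<psi> t)" unfolding K_def \<rho>_def using \<rho> by (simp add: \<rho>_def)
    finally show ?thesis .
  qed
  then show ?thesis using Kpos by blast
qed

lemma sum_decay: "\<exists>Q\<ge>1. \<forall>r>0. \<forall>m::nat. m \<ge> 1 \<longrightarrow> V r / V (\<psi> (real m * \<phi> r)) \<le> Q * real m powr (-(d1/d4))"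
proof -
  define a where "a = d1/d4"
  have a: "a > 1" unfolding a_def using d1_gt_d4 consts_pos by auto
  define Q where "Q = max 1 ((1/c1) * c4 powr a)"
  have "V r / V (\<psi> (real m * \<phi> r)) \<le> Q * real m powr (-a)" if r: "r > 0" and m: "m \<ge> 1" for r m
  proof -
    define u where "u = \<psi> (real m * \<phi> r)"
    have mphi: "real m * \<phi> r > 0" using m phi_pos[OF r] by auto
    have u: "u > 0" "\<phi> u = real m * \<phi> r" unfolding u_def using psi_pos phi_psi mphi by auto
    have ur: "r \<le> u" unfolding u_def using psi_ge[OF r] m phi_pos[OF r] by auto
    show ?thesis
    proof (cases "u = r")
      case True
      then have "real m = 1" using u phi_pos[OF r] by auto
      then show ?thesis using True u_def V_pos r unfolding Q_def by auto
    next
      case False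
      then have ur': "r < u" using ur by auto
      have "\<phi> u \<le> c4 * (u/r) powr d4 * \<phi> r" using phi_up[OF r ur'] .
      then have m1: "real m / c4 \<le> (u/r) powr d4" using u phi_pos[OF r] consts_pos
        by (simp add: field_simps)
      have "(real m / c4) powr a \<le> ((u/r) powr d4) powr a"
        using m1 a consts_pos by (intro powr_mono2) auto
      also have "\<dots> = (u/r) powr d1" unfolding a_def using consts_pos by (simp add: powr_powr)
      finally have m2: "(real m / c4) powr a \<le> (u/r) powr d1" .
      have "c1 * (u/r) powr d1 * V r \<le> V u" using V_low[OF r ur'] .
      moreover have "c1 * (real m / c4) powr a * V r \<le> c1 * (u/r) powr d1 * V r"
        using m2 consts_pos V_pos[OF r] by (intro mult_right_mono mult_left_mono) auto
      ultimately have "c1 * (real m / c4) powr a * V r \<le> V u" by linarith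
      then have "V r / V u \<le> 1 / (c1 * (real m / c4) powr a)"
        using V_pos[OF r] V_pos[OF u(1)] consts_pos m
        by (simp add: field_simps)
      also have "1 / (c1 * (real m / c4) powr a) = (1/c1) * c4 powr a * real m powr (-a)"
        using consts_pos m by (simp add: powr_divide powr_minus field_simps)
      also have "\<dots> \<le> Q * real m powr (-a)" unfolding Q_def by (intro mult_right_mono) auto
      finally show ?thesis unfolding u_def .
    qed
  qed
  moreover have "Q \<ge> 1" unfolding Q_def by auto
  ultimately show ?thesis unfolding a_def by blast
qed

end


locale setting = scales V \<phi> c1 c2 c3 c4 d1 d2 d3 d4
  for V \<phi> :: "real \<Rightarrow> real" and c1 c2 c3 c4 d1 d2 d3 d4 :: real +
  fixes \<mu> :: "'a::metric_space measure"
    and \<Omega> :: "'w set" and X :: "real \<Rightarrow> 'w \<Rightarrow> 'a option" and P :: "'a \<Rightarrow> 'w measure"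
    and p :: "real \<Rightarrow> 'a \<Rightarrow> 'a \<Rightarrow> real" and C :: real
  assumes mu_borel: "sets \<mu> = sets borel"
    and mu_full_support: "\<And>U. open U \<Longrightarrow> U \<noteq> {} \<Longrightarrow> emeasure \<mu> U > 0"
    and mu_radon: "\<And>K. compact K \<Longrightarrow> emeasure \<mu> K < \<infinity>"
    and hunt: "hunt_process \<Omega> X P"
    and hk: "heat_kernel_of \<Omega> X P \<mu> p"
    and Cpos: "C > 0"
    and hk_lo: "\<And>t x y. t > 0 \<Longrightarrow> C * hk_profile V \<phi> (the_inv_into {0<..} \<phi>) t x y \<le> p t x y"
    and hk_up: "\<And>t x y. t > 0 \<Longrightarrow> p t x y \<le> (1 / C) * hk_profile V \<phi> (the_inv_into {0<..} \<phi>) t x y"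
    and balls_rel_compact: "\<And>(x::'a) r. compact (closure (ball x r))"
begin

definition "Ev u Bs = {\<omega> \<in> \<Omega>. X u \<omega> \<in> Some ` Bs}"

lemma prob: "prob_space (P x)" and sets_P: "sets (P x) = sets (natF \<Omega> X \<infinity>)"
  and space_P: "space (P x) = \<Omega>"
  using hunt unfolding hunt_process_def by blast+

lemma Ev_sets: "0 \<le> u \<Longrightarrow> Bs \<in> sets borel \<Longrightarrow> Ev u Bs \<in> sets (P x)"
  unfolding sets_P Ev_def by (rule natF_event) auto

lemma measP: "emeasure (P x) A = ennreal (measure (P x) A)"
proof -
  interpret prob_space "P x" by (rule prob)
  show ?thesis by (rule emeasure_eq_measure)
qed

lemma measP_le1: "measure (P x) A \<le> 1"
  using prob prob_space.prob_le_1 by blast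

lemma hk_eq: "t > 0 \<Longrightarrow> Bs \<in> sets borel \<Longrightarrow>
   emeasure (P x) (Ev t Bs) = (\<integral>\<^sup>+ y \<in> Bs. ennreal (p t x y) \<partial>\<mu>)"
  using hk unfolding heat_kernel_of_def Ev_def by blast

lemma hkp_le: "t > 0 \<Longrightarrow> hk_profile V \<phi> \<psi> t x y \<le> 1 / V (\<psi> t)"
  unfolding hk_profile_def by auto

lemma hkp_far: "x \<noteq> y \<Longrightarrow> hk_profile V \<phi> \<psi> t x y \<le> t / (V (dist x y) * \<phi> (dist x y))"
  unfolding hk_profile_def by auto

lemma hkp_ge: "t > 0 \<Longrightarrow> x \<noteq> y \<Longrightarrow> c \<le> 1 / V (\<psi> t) \<Longrightarrow> c \<le> t / (V (dist x y) * \<phi> (dist x y))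
   \<Longrightarrow> c \<le> hk_profile V \<phi> \<psi> t x y"
  unfolding hk_profile_def by auto

lemma hkp_ge_diag: "hk_profile V \<phi> \<psi> t x x = 1 / V (\<psi> t)"
  unfolding hk_profile_def by auto

lemma p_lo: "t > 0 \<Longrightarrow> C * hk_profile V \<phi> \<psi> t x y \<le> p t x y"
  using hk_lo unfolding \<psi>_def by blast

lemma p_up: "t > 0 \<Longrightarrow> p t x y \<le> (1 / C) * hk_profile V \<phi> \<psi> t x y"
  using hk_up unfolding \<psi>_def by blast

lemma p_up_diag: "t > 0 \<Longrightarrow> p t x y \<le> 1 / (C * V (\<psi> t))"
proof -
  assume t: "t > 0"
  have "(1/C) * hk_profile V \<phi> \<psi> t x y \<le> (1/C) * (1 / V (\<psi> t))"
    using hkp_le[OF t] Cpos by (intro mult_left_mono) auto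
  then show ?thesis using p_up[OF t, of x y] by simp
qed

lemma ball_finite: "emeasure \<mu> (ball x r) < \<infinity>"
proof -
  have "emeasure \<mu> (ball x r) \<le> emeasure \<mu> (closure (ball x r))"
    by (rule emeasure_mono) (auto simp: mu_borel closure_subset)
  also have "\<dots> < \<infinity>" using mu_radon balls_rel_compact by blast
  finally show ?thesis .
qed

lemma cball_finite: "emeasure \<mu> (cball x r) < \<infinity>"
proof -
  have "emeasure \<mu> (cball x r) \<le> emeasure \<mu> (ball x (r+1))"
    by (rule emeasure_mono) (auto simp: mu_borel)
  then show ?thesis using ball_finite[of x "r+1"] by auto
qed

lemma ev_upper:
  assumes t: "t > 0" and Bs: "Bs \<in> sets borel" and fin: "emeasure \<mu> Bs < \<infinity>" and c: "c \<ge> 0"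
    and bd: "\<And>y. y \<in> Bs \<Longrightarrow> p t x y \<le> c"
  shows "measure (P x) (Ev t Bs) \<le> c * measure \<mu> Bs"
proof -
  have "ennreal (measure (P x) (Ev t Bs)) = (\<integral>\<^sup>+ y. ennreal (p t x y) * indicator Bs y \<partial>\<mu>)"
    using hk_eq[OF t Bs, of x] measP by simp
  also have "\<dots> \<le> (\<integral>\<^sup>+ y. ennreal c * indicator Bs y \<partial>\<mu>)"
    by (intro nn_integral_mono) (auto simp: indicator_def bd intro!: ennreal_leI)
  also have "\<dots> = ennreal c * emeasure \<mu> Bs" using Bs mu_borel by (intro nn_integral_cmult_indicator) auto
  also have "\<dots> = ennreal (c * measure \<mu> Bs)"
    using fin by (simp add: emeasure_eq_ennreal_measure ennreal_mult c)
  finally show ?thesis using c by (simp add: ennreal_le_iff)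
qed

lemma ev_lower:
  assumes t: "t > 0" and Bs: "Bs \<in> sets borel" and fin: "emeasure \<mu> Bs < \<infinity>" and c: "c \<ge> 0"
    and bd: "\<And>y. y \<in> Bs \<Longrightarrow> c \<le> p t x y"
  shows "c * measure \<mu> Bs \<le> measure (P x) (Ev t Bs)"
proof -
  have "ennreal (c * measure \<mu> Bs) = ennreal c * emeasure \<mu> Bs"
    using fin by (simp add: emeasure_eq_ennreal_measure ennreal_mult c)
  also have "\<dots> = (\<integral>\<^sup>+ y. ennreal c * indicator Bs y \<partial>\<mu>)"
    using Bs mu_borel by (intro nn_integral_cmult_indicator[symmetric]) auto
  also have "\<dots> \<le> (\<integral>\<^sup>+ y. ennreal (p t x y) * indicator Bs y \<partial>\<mu>)"
    by (intro nn_integral_mono) (auto simp: indicator_def bd intro!: ennreal_leI)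
  also have "\<dots> = ennreal (measure (P x) (Ev t Bs))"
    using hk_eq[OF t Bs, of x] measP by simp
  finally show ?thesis by (simp add: ennreal_le_iff)
qed

end


context scales begin
lemma phi_growth: assumes M: "M > 0" shows "\<exists>L>1. \<forall>\<rho>>0. M * \<phi> \<rho> \<le> \<phi> (L * \<rho>)"
proof -
  define L where "L = max 2 ((M/c3) powr (1/d3))"
  have L1: "L > 1" unfolding L_def by auto
  have "(M/c3) = ((M/c3) powr (1/d3)) powr d3"
    using consts_pos M by (simp add: powr_powr)
  also have "\<dots> \<le> L powr d3" unfolding L_def using consts_pos M by (intro powr_mono2) auto
  finally have Ld3: "M \<le> c3 * L powr d3" using consts_pos by (simp add: field_simps)
  have "M * \<phi> \<rho> \<le> \<phi> (L * \<rho>)" if \<rho>: "\<rho> > 0" for \<rho>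
  proof -
    have "c3 * ((L*\<rho>)/\<rho>) powr d3 * \<phi> \<rho> \<le> \<phi> (L*\<rho>)" using phi_low[of \<rho> "L*\<rho>"] \<rho> L1 by auto
    moreover have "(L*\<rho>)/\<rho> = L" using \<rho> by simp
    moreover have "M * \<phi> \<rho> \<le> c3 * L powr d3 * \<phi> \<rho>" using mult_right_mono[OF Ld3, of "\<phi> \<rho>"] phi_pos[OF \<rho>] by simp
    ultimately show ?thesis by simp
  qed
  then show ?thesis using L1 by blast
qed
end

context setting begin

lemma hkp_lowG:
  assumes t: "t > 0" and G: "G \<ge> 1"
    and bd: "x \<noteq> y \<Longrightarrow> V (dist x y) * \<phi> (dist x y) \<le> G * V (\<psi> t) * t"
  shows "1 / (G * V (\<psi> t)) \<le> hk_profile V \<phi> \<psi> t x y"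
proof -
  have Vp: "V (\<psi> t) > 0" using V_pos psi_pos t by auto
  have a: "1 / (G * V (\<psi> t)) \<le> 1 / V (\<psi> t)" using G Vp by (simp add: field_simps)
  show ?thesis
  proof (cases "x = y")
    case True then show ?thesis using a by (simp add: hkp_ge_diag)
  next
    case False
    have dpos: "dist x y > 0" using False by simp
    have pos: "V (dist x y) * \<phi> (dist x y) > 0" using V_pos phi_pos dpos by auto
    have "1 / (G * V (\<psi> t)) \<le> t / (V (dist x y) * \<phi> (dist x y))"
      using bd[OF False] pos G Vp t by (simp add: field_simps)
    then show ?thesis using hkp_ge[OF t False a] by blast
  qed
qed

lemma hkp_near:
  assumes t: "t > 0" and d: "dist x y \<le> \<psi> t"
  shows "1 / V (\<psi> t) \<le> hk_profile V \<phi> \<psi> t x y"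
proof -
  have "V (dist x y) * \<phi> (dist x y) \<le> 1 * V (\<psi> t) * t" if "x \<noteq> y"
  proof -
    have dpos: "dist x y > 0" using that by simp
    have "V (dist x y) \<le> V (\<psi> t)" using Vmono dpos d by auto
    moreover have "\<phi> (dist x y) \<le> t" using phi_le_iff[of "dist x y" "\<psi> t"] dpos psi_pos[OF t] d phi_psi[OF t] by auto
    ultimately show ?thesis using phi_pos[OF dpos] V_pos[OF psi_pos[OF t]] by (simp add: mult_mono)
  qed
  then show ?thesis using hkp_lowG[OF t, of 1 x y] by simp
qed

lemma p_near:
  assumes t: "t > 0" and d: "dist x y \<le> \<psi> t"
  shows "C / V (\<psi> t) \<le> p t x y"
  using mult_left_mono[OF hkp_near[OF t d] less_imp_le[OF Cpos]] p_lo[OF t, of x y] by simp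

lemma vol_upper: assumes r: "r > 0" shows "measure \<mu> (cball x r) \<le> V r / C"
proof -
  have t: "\<phi> r > 0" "\<psi> (\<phi> r) = r" using phi_pos psi_phi r by auto
  have "C / V r * measure \<mu> (cball x r) \<le> measure (P x) (Ev (\<phi> r) (cball x r))"
    using p_near[OF t(1), of x] t V_pos[OF r] Cpos
    by (intro ev_lower[OF _ _ cball_finite]) auto
  also have "\<dots> \<le> 1" by (rule measP_le1)
  finally show ?thesis using V_pos[OF r] Cpos by (simp add: field_simps)
qed

end


context setting begin

lemma ball_meas_pos: assumes "\<rho> > 0" shows "measure \<mu> (ball x \<rho>) > 0"
proof -
  have "emeasure \<mu> (ball x \<rho>) > 0" using mu_full_support[of "ball x \<rho>"] assms by auto
  then show ?thesis using ball_finite[of x \<rho>]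
    by (simp add: emeasure_eq_ennreal_measure)
qed

lemma vol_lower_scaled:
  obtains K A where "K > 0" "A > 1"
    "\<And>x \<rho>. \<rho> > 0 \<Longrightarrow> C^3 / (2*K) * V \<rho> \<le> measure \<mu> (ball x (A*\<rho>))"
proof -
  obtain K where K: "K > 0" "\<And>t t'. t > 0 \<Longrightarrow> t \<le> t' \<Longrightarrow> t' \<le> 2 * t \<Longrightarrow> V (\<psi> t') \<le> K * V (\<psi> t)"
    using psi_double by blast
  define M where "M = 2*K/C^2"
  have M: "M > 0" unfolding M_def using K Cpos by auto
  obtain L where L: "L > 1" "\<And>\<rho>. \<rho> > 0 \<Longrightarrow> M * \<phi> \<rho> \<le> \<phi> (L * \<rho>)"
    using phi_growth[OF M] by blast
  define A where "A = 2*L"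
  have A: "A > 1" unfolding A_def using L by auto
  have main: "C^3 / (2*K) * V \<rho> \<le> measure \<mu> (ball x (A*\<rho>))" if \<rho>: "\<rho> > 0" for x \<rho>
  proof -
    define s where "s = \<phi> \<rho>"
    have s: "s > 0" "\<psi> s = \<rho>" unfolding s_def using phi_pos psi_phi \<rho> by auto
    define D where "D = ball x \<rho>"
    define mD where "mD = measure \<mu> D"
    have Dfin: "emeasure \<mu> D < \<infinity>" unfolding D_def by (rule ball_finite)
    have Dborel: "D \<in> sets borel" unfolding D_def by auto
    have mD: "mD > 0" unfolding mD_def D_def using ball_meas_pos[OF \<rho>] .
    have Vr: "V \<rho> > 0" using V_pos \<rho> by auto
    define E where "E = Ev s (ball x (A*\<rho>))"
    define mA where "mA = measure \<mu> (ball x (A*\<rho>))"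
    define \<alpha> where "\<alpha> = mD / (C * V \<rho>)"
    have \<alpha>: "\<alpha> > 0" unfolding \<alpha>_def using mD Vr Cpos by auto
    have Esets: "E \<in> sets (P x)" unfolding E_def using s by (intro Ev_sets) auto
    have low: "C / (K * V \<rho>) * mD \<le> measure (P x) (Ev (s+s) D)"
      unfolding mD_def
    proof (rule ev_lower[OF _ _ Dfin])
      show "0 < s + s" using s by auto
      show "D \<in> sets borel" unfolding D_def by auto
      show "0 \<le> C / (K * V \<rho>)" using Cpos K Vr by auto
      fix y assume y: "y \<in> D"
      have "\<psi> s \<le> \<psi> (s+s)" using psi_mono s by auto
      then have "dist x y \<le> \<psi> (s+s)" using y s unfolding D_def by auto
      then have "C / V (\<psi> (s+s)) \<le> p (s+s) x y" using p_near s by auto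
      moreover have "V (\<psi> (s+s)) \<le> K * V \<rho>" using K(2)[of s "s+s"] s by auto
      moreover have "V (\<psi> (s+s)) > 0" using V_pos psi_pos s by auto
      ultimately show "C / (K * V \<rho>) \<le> p (s+s) x y" using Cpos
        by (smt (verit) frac_le)
    qed
    have mk: "emeasure (P x) (\<Omega> \<inter> {\<omega>\<in>\<Omega>. X (s+s) \<omega> \<in> Some ` D})
         = (\<integral>\<^sup>+ \<omega>. indicator \<Omega> \<omega> * transD \<Omega> X P s (Some ` D) (X s \<omega>) \<partial>P x)"
      using s by (intro markov_step[OF hunt]) (auto simp: D_def sets.top[of "natF \<Omega> X (ennreal s)", simplified])
    have pw: "indicator \<Omega> \<omega> * transD \<Omega> X P s (Some ` D) (X s \<omega>) \<le> ennreal (\<alpha>/M) + ennreal \<alpha> * indicator E \<omega>" for \<omega>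
    proof (cases "\<omega> \<in> \<Omega>")
      case False then show ?thesis by simp
    next
      case True
      show ?thesis
      proof (cases "X s \<omega>")
        case None then show ?thesis using True by (simp add: transD_def)
      next
        case (Some y)
        have td: "transD \<Omega> X P s (Some ` D) (X s \<omega>) = ennreal (measure (P y) (Ev s D))"
          using Some measP unfolding transD_def Ev_def by simp
        show ?thesis
        proof (cases "dist x y < A * \<rho>")
          case True
          then have "\<omega> \<in> E" unfolding E_def Ev_def using \<open>\<omega>\<in>\<Omega>\<close> Some by auto
          have "measure (P y) (Ev s D) \<le> 1 / (C * V (\<psi> s)) * mD"
            unfolding mD_def using p_up_diag s Cpos Vr
            by (intro ev_upper[OF _ Dborel Dfin]) auto
          then have "measure (P y) (Ev s D) \<le> \<alpha>" unfolding \<alpha>_def using s by simp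
          then show ?thesis using td \<open>\<omega>\<in>\<Omega>\<close> \<open>\<omega> \<in> E\<close> \<alpha> M
            by (simp add: ennreal_leI add_increasing)
        next
          case False
          have bd: "p s y z \<le> 1 / (C * M * V \<rho>)" if z: "z \<in> D" for z
          proof -
            have "dist x y \<le> dist x z + dist z y" by (rule dist_triangle)
            moreover have "dist x z < \<rho>" using z unfolding D_def by simp
            moreover have "\<rho> \<le> L * \<rho>" using L \<rho> by simp
            moreover have "2*(L*\<rho>) \<le> dist x y" using False unfolding A_def by (simp add: mult.assoc)
            moreover have "dist z y = dist y z" by (rule dist_commute)
            ultimately have dyz: "L * \<rho> \<le> dist y z" by linarith
            have "L * \<rho> > 0" using L \<rho> by simp
            then have yz2: "dist y z > 0" using dyz by linarith
            then have yz: "y \<noteq> z" "dist y z > 0" by auto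
            have "V \<rho> \<le> V (dist y z)" using Vmono[of \<rho> "dist y z"] dyz L \<rho>
              by (smt (verit) mult_le_cancel_right1)
            moreover have "M * s \<le> \<phi> (dist y z)"
              using L(2)[OF \<rho>] phi_le_iff[of "L*\<rho>" "dist y z"] dyz \<open>L * \<rho> > 0\<close> yz unfolding s_def by auto
            ultimately have "V \<rho> * (M * s) \<le> V (dist y z) * \<phi> (dist y z)"
              using Vr M s by (intro mult_mono) auto
            then have "s / (V (dist y z) * \<phi> (dist y z)) \<le> s / (V \<rho> * (M * s))"
              using Vr M s V_pos[OF yz2] phi_pos[OF yz2] by (intro divide_left_mono) auto
            also have "\<dots> = 1 / (M * V \<rho>)" using s by simp
            finally have h: "hk_profile V \<phi> \<psi> s y z \<le> 1 / (M * V \<rho>)"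
              using hkp_far[OF yz(1), of s] by linarith
            have "p s y z \<le> (1/C) * hk_profile V \<phi> \<psi> s y z" using p_up s by auto
            also have "\<dots> \<le> (1/C) * (1 / (M * V \<rho>))" using h Cpos by (intro mult_left_mono) auto
            finally show ?thesis by simp
          qed
          have "measure (P y) (Ev s D) \<le> 1 / (C * M * V \<rho>) * mD"
            unfolding mD_def using s Cpos Vr M
            by (intro ev_upper[OF _ Dborel Dfin] bd) auto
          then have "measure (P y) (Ev s D) \<le> \<alpha> / M" unfolding \<alpha>_def using M by (simp add: ac_simps)
          then show ?thesis using td \<open>\<omega>\<in>\<Omega>\<close> by (simp add: ennreal_leI add_increasing2)
        qed
      qed
    qed
    have "ennreal (measure (P x) (Ev (s+s) D)) = (\<integral>\<^sup>+ \<omega>. indicator \<Omega> \<omega> * transD \<Omega> X P s (Some ` D) (X s \<omega>) \<partial>P x)"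
    proof -
      have "\<Omega> \<inter> {\<omega>\<in>\<Omega>. X (s+s) \<omega> \<in> Some ` D} = Ev (s+s) D" unfolding Ev_def by auto
      then show ?thesis using mk measP[of x "Ev (s+s) D"] by simp
    qed
    also have "\<dots> \<le> (\<integral>\<^sup>+ \<omega>. ennreal (\<alpha>/M) + ennreal \<alpha> * indicator E \<omega> \<partial>P x)"
      by (intro nn_integral_mono pw)
    also have "\<dots> = (\<integral>\<^sup>+ \<omega>. ennreal (\<alpha>/M) \<partial>P x) + (\<integral>\<^sup>+ \<omega>. ennreal \<alpha> * indicator E \<omega> \<partial>P x)"
      using Esets by (intro nn_integral_add) auto
    also have "\<dots> = ennreal (\<alpha>/M) + ennreal \<alpha> * ennreal (measure (P x) E)"
      using Esets prob_space.emeasure_space_1[OF prob] by (simp add: nn_integral_cmult_indicator measP space_P)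
    also have "\<dots> = ennreal (\<alpha>/M + \<alpha> * measure (P x) E)"
      using \<alpha> M by (simp add: ennreal_mult ennreal_plus)
    finally have up0: "ennreal (measure (P x) (Ev (s+s) D)) \<le> ennreal (\<alpha>/M + \<alpha> * measure (P x) E)" .
    have nn: "0 \<le> \<alpha>/M + \<alpha> * measure (P x) E" using \<alpha> M by (simp add: measure_nonneg)
    have up: "measure (P x) (Ev (s+s) D) \<le> \<alpha>/M + \<alpha> * measure (P x) E"
      using up0 ennreal_le_iff[OF nn] by blast
    have mE: "measure (P x) E \<le> 1 / (C * V (\<psi> s)) * mA"
      unfolding E_def mA_def using p_up_diag s Cpos Vr
      by (intro ev_upper[OF _ _ ball_finite]) auto
    then have mE': "measure (P x) E \<le> mA / (C * V \<rho>)" using s by simp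
    have "\<alpha>/M = \<alpha>*(1/M)" by simp
    then have "C / (K * V \<rho>) * mD \<le> \<alpha>*(1/M) + \<alpha> * (mA / (C * V \<rho>))"
      using low up mult_left_mono[OF mE' less_imp_le[OF \<alpha>]] by linarith
    then have h1: "C / (K * V \<rho>) * mD \<le> \<alpha> * (1/M + mA / (C * V \<rho>))"
      by (simp only: distrib_left)
    have h2: "C / (K * V \<rho>) * mD = \<alpha> * (C^2/K)"
      unfolding \<alpha>_def using Vr Cpos K by (simp add: field_simps power2_eq_square)
    have "C^2/K \<le> 1/M + mA / (C * V \<rho>)" using mult_left_le_imp_le[OF h1[unfolded h2] \<alpha>] .
    moreover have "1/M = C^2/(2*K)" unfolding M_def by simp
    moreover have "C^2/K = C^2/(2*K) + C^2/(2*K)" by (simp add: field_simps)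
    ultimately have "C^2/(2*K) \<le> mA / (C * V \<rho>)" by linarith
    then have "C^2/(2*K) * (C * V \<rho>) \<le> mA" using Cpos Vr by (simp add: le_divide_eq)
    moreover have c3: "C^3 = C^2*C" by (simp add: power3_eq_cube power2_eq_square)
    moreover have "C^3 / (2*K) * V \<rho> = C^2/(2*K) * (C * V \<rho>)" unfolding c3 by simp
    ultimately show ?thesis unfolding mA_def by simp
  qed
  show ?thesis using that[OF K(1) A main] .
qed

lemma vol_lower: "\<exists>c>0. \<forall>x R. R > 0 \<longrightarrow> c * V R \<le> measure \<mu> (ball x R)"
proof -
  obtain K A where KA: "K > 0" "A > 1"
    "\<And>x \<rho>. \<rho> > 0 \<Longrightarrow> C^3 / (2*K) * V \<rho> \<le> measure \<mu> (ball x (A*\<rho>))"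
    using vol_lower_scaled by metis
  define c where "c = C^3 / (2*K) / (max 1 c2 * A powr d2)"
  have cpos: "c > 0" unfolding c_def using KA Cpos by auto
  have "c * V R \<le> measure \<mu> (ball x R)" if R: "R > 0" for x R
  proof -
    have r: "R / A > 0" "R / A \<le> R" using R KA by (auto simp: field_simps)
    have "V R \<le> max 1 c2 * (R / (R/A)) powr d2 * V (R/A)" using V_up[OF r] .
    also have "R / (R/A) = A" using R KA by simp
    finally have "V R \<le> max 1 c2 * A powr d2 * V (R/A)" .
    then have "c * V R \<le> C^3 / (2*K) * V (R/A)"
      unfolding c_def using KA Cpos by (simp add: field_simps)
    also have "\<dots> \<le> measure \<mu> (ball x (A * (R/A)))" using KA(3)[OF r(1)] .
    finally show ?thesis using KA by simp
  qed
  then show ?thesis using cpos by blast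
qed

end


context setting begin

lemma key_bound:
  assumes r: "r > 0" and t: "\<phi> r \<le> t" and \<theta>: "2 \<le> \<theta>" and xx0: "dist x x0 \<le> r"
    and cmu: "cmu > 0" "\<And>x R. R > 0 \<Longrightarrow> cmu * V R \<le> measure \<mu> (ball x R)"
    and K: "K > 0" "\<And>t t'. t > 0 \<Longrightarrow> t \<le> t' \<Longrightarrow> t' \<le> 2 * t \<Longrightarrow> V (\<psi> t') \<le> K * V (\<psi> t)"
    and Q: "Q \<ge> 1" "\<And>r m. r > 0 \<Longrightarrow> m \<ge> 1 \<Longrightarrow> V r / V (\<psi> (real m * \<phi> r)) \<le> Q * real m powr (-(d1/d4))"
    and Zs: "summable (\<lambda>m::nat. real m powr (-(d1/d4)))" and Zdef: "Z = suminf (\<lambda>m::nat. real m powr (-(d1/d4)))"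
    and Gdef: "G = max 1 (c2 * 2 powr d2 * (c4 * 2 powr d4))"
    and Wdef: "W = 1 + Q / C^2 * Z"
  shows "C * cmu / (2 * G * K * W) * (V r / \<phi> r) * (t / V (\<psi> t)) \<le> R_hit \<Omega> X P x0 x r t \<theta>"
proof -
  interpret PX: prob_space "P x" by (rule prob)
  define h where "h = \<phi> r"
  have h: "h > 0" unfolding h_def using phi_pos r by auto
  have tpos: "t > 0" using h t unfolding h_def by auto
  define \<rho> where "\<rho> = \<psi> t"
  have \<rho>: "\<rho> > 0" "r \<le> \<rho>" unfolding \<rho>_def using psi_pos tpos psi_ge r t by auto
  have Vr: "V r > 0" "V \<rho> > 0" using V_pos r \<rho> by auto
  have Z0: "Z \<ge> 0" unfolding Zdef using Zs by (intro suminf_nonneg) auto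
  have W1: "W \<ge> 1" unfolding Wdef using Q Z0 Cpos by auto
  have G1: "G \<ge> 1" unfolding Gdef by auto
  define n where "n = nat \<lfloor>t / h\<rfloor>"
  have th1: "t / h \<ge> 1" using t h unfolding h_def by simp
  have n1: "n \<ge> 1" unfolding n_def using th1 by linarith
  have nle: "real n \<le> t / h" unfolding n_def using th1 by linarith
  have nge: "real n \<ge> t / h / 2"
  proof -
    have f1: "real_of_int \<lfloor>t/h\<rfloor> > t/h - 1" by linarith
    have f2: "\<lfloor>t/h\<rfloor> \<ge> 1" using th1 by (simp add: one_le_floor)
    have "real n = real_of_int \<lfloor>t/h\<rfloor>" unfolding n_def using f2 by simp
    moreover have "real_of_int \<lfloor>t/h\<rfloor> \<ge> 1" using f2 by simp
    moreover have "\<And>(f::real) y. f \<ge> 1 \<Longrightarrow> f > y - 1 \<Longrightarrow> y/2 \<le> f" by linarith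
    ultimately show ?thesis using f1 by metis
  qed
  define s where "s k = t + real k * h" for k :: nat
  have s_pos: "s k > 0" for k unfolding s_def using tpos h by (simp add: add_pos_nonneg)
  have s_gt: "k \<ge> 1 \<Longrightarrow> t < s k" for k unfolding s_def using h by auto
  have s_le: "k \<le> n \<Longrightarrow> s k \<le> 2 * t" for k
  proof -
    assume "k \<le> n"
    then have "real k * h \<le> real n * h" using h by (intro mult_right_mono) auto
    also have "\<dots> \<le> t" using nle h by (simp add: field_simps)
    finally show ?thesis unfolding s_def by simp
  qed
  have s_mono: "i \<le> j \<Longrightarrow> s i \<le> s j" for i j unfolding s_def using h by (simp add: mult_right_mono)
  define B where "B = cball x0 r"
  have Bborel: "B \<in> sets borel" unfolding B_def by auto
  have Bfin: "emeasure \<mu> B < \<infinity>" unfolding B_def by (rule cball_finite)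
  define mB where "mB = measure \<mu> B"
  have mB_up: "mB \<le> V r / C" unfolding mB_def B_def by (rule vol_upper[OF r])
  have mB_low: "cmu * V r \<le> mB"
  proof -
    have "measure \<mu> (ball x0 r) \<le> measure \<mu> (cball x0 r)"
      using cball_finite[of x0 r] by (intro measure_mono_fmeasurable) (auto simp: mu_borel fmeasurable_def)
    then show ?thesis using cmu(2)[OF r, of x0] unfolding mB_def B_def by linarith
  qed
  have mB0: "mB \<ge> 0" unfolding mB_def by simp
  define A where "A k = Ev (s k) B" for k
  define F where "F j = A j - (\<Union>i\<in>{1..<j}. A i)" for j
  have A_nat: "A i \<in> sets (natF \<Omega> X (ennreal (s j)))" if "i \<le> j" for i j
    unfolding A_def Ev_def using s_mono[OF that] s_pos[of i] Bborel
    by (intro natF_event) auto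
  have F_nat: "F j \<in> sets (natF \<Omega> X (ennreal (s j)))" for j
    unfolding F_def using A_nat by (intro sets.Diff sets.finite_UN) auto
  have A_sets: "A k \<in> sets (P x)" for k unfolding A_def using s_pos[of k] Bborel by (intro Ev_sets) auto
  have F_sets: "F j \<in> sets (P x)" for j
    using F_nat[of j] natF_mono[of "ennreal (s j)" \<infinity> \<Omega> X] unfolding sets_P by auto
  define a0 where "a0 = C / (G * K * V \<rho>) * mB"
  have A_low: "a0 \<le> measure (P x) (A k)" if k: "1 \<le> k" "k \<le> n" for k
    unfolding a0_def mB_def A_def
  proof (rule ev_lower[OF s_pos Bborel Bfin])
    show "0 \<le> C / (G * K * V \<rho>)" using Cpos G1 K Vr by auto
    fix y assume y: "y \<in> B"
    have sk: "t < s k" "s k \<le> 2 * t" using s_gt s_le k by auto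
    have rs: "r \<le> \<psi> (s k)" using psi_ge[OF r] t sk by auto
    have bd: "V (dist x y) * \<phi> (dist x y) \<le> G * V (\<psi> (s k)) * s k" if xy: "x \<noteq> y"
    proof -
      have d: "dist x y > 0" "dist x y \<le> 2 * r"
        using xy y xx0 dist_triangle[of x y x0] unfolding B_def by (auto simp: dist_commute)
      have "V (dist x y) \<le> V (2*r)" using Vmono d by auto
      also have "\<dots> \<le> c2 * 2 powr d2 * V r" using V_scale[of r "2*r"] r Vr by (simp add: field_simps)
      also have "\<dots> \<le> c2 * 2 powr d2 * V (\<psi> (s k))" using Vmono[OF r rs] consts_pos by simp
      finally have v: "V (dist x y) \<le> c2 * 2 powr d2 * V (\<psi> (s k))" .
      have "\<phi> (dist x y) \<le> \<phi> (2*r)" using phi_le_iff[of "dist x y" "2*r"] d r by auto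
      also have "\<dots> \<le> c4 * 2 powr d4 * \<phi> r" using phi_scale[of r "2*r"] r phi_pos[OF r] by (simp add: field_simps)
      also have "\<dots> \<le> c4 * 2 powr d4 * s k" using t sk consts_pos by simp
      finally have ph: "\<phi> (dist x y) \<le> c4 * 2 powr d4 * s k" .
      have "V (dist x y) * \<phi> (dist x y) \<le> (c2 * 2 powr d2 * V (\<psi> (s k))) * (c4 * 2 powr d4 * s k)"
        using v ph V_pos[OF d(1)] phi_pos[OF d(1)] consts_pos V_pos[OF psi_pos[OF s_pos]] s_pos
        by (intro mult_mono) auto
      also have "\<dots> = (c2 * 2 powr d2 * (c4 * 2 powr d4)) * V (\<psi> (s k)) * s k" by simp
      also have "\<dots> \<le> G * V (\<psi> (s k)) * s k" unfolding Gdef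
        using V_pos[OF psi_pos[OF s_pos[of k]]] s_pos[of k] by (intro mult_right_mono) auto
      finally show ?thesis .
    qed
    have "1 / (G * V (\<psi> (s k))) \<le> hk_profile V \<phi> \<psi> (s k) x y" by (rule hkp_lowG[OF s_pos G1 bd])
    then have "C * (1 / (G * V (\<psi> (s k)))) \<le> C * hk_profile V \<phi> \<psi> (s k) x y"
      using Cpos by (intro mult_left_mono) auto
    then have hh: "C / (G * V (\<psi> (s k))) \<le> p (s k) x y"
      using p_lo[OF s_pos, of k x y] by simp
    have h2: "V (\<psi> (s k)) \<le> K * V \<rho>" unfolding \<rho>_def using K(2)[OF tpos] sk by auto
    have h3: "V (\<psi> (s k)) > 0" using V_pos psi_pos s_pos by auto
    have "G * V (\<psi> (s k)) \<le> G * (K * V \<rho>)" using h2 G1 by (intro mult_left_mono) auto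
    then have "C / (G * (K * V \<rho>)) \<le> C / (G * V (\<psi> (s k)))"
      using Cpos G1 h3 by (intro divide_left_mono) auto
    then show "C / (G * K * V \<rho>) \<le> p (s k) x y" using hh by (simp add: mult.assoc)
  qed
  have F_sub: "F j \<subseteq> A j" for j unfolding F_def by auto
  have F_disj: "F j1 \<inter> F j2 = {}" if "1 \<le> j1" "1 \<le> j2" "j1 \<noteq> j2" for j1 j2
  proof (cases "j1 < j2")
    case True then show ?thesis unfolding F_def using that by auto
  next
    case False then have "j2 < j1" using that by auto
    then show ?thesis unfolding F_def using that by auto
  qed
  have A_cover: "A k \<subseteq> (\<Union>j\<in>{1..k}. F j)" if k: "1 \<le> k" for k
  proof
    fix \<omega> assume \<omega>: "\<omega> \<in> A k"
    define j where "j = (LEAST i. 1 \<le> i \<and> \<omega> \<in> A i)"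
    have P1: "1 \<le> j \<and> \<omega> \<in> A j" unfolding j_def using LeastI[of "\<lambda>i. 1 \<le> i \<and> \<omega> \<in> A i" k] k \<omega> by blast
    have P2: "j \<le> k" unfolding j_def using Least_le[of "\<lambda>i. 1 \<le> i \<and> \<omega> \<in> A i" k] k \<omega> by blast
    have P3: "\<omega> \<notin> A i" if "i \<in> {1..<j}" for i
      using not_less_Least[of i "\<lambda>i. 1 \<le> i \<and> \<omega> \<in> A i"] that unfolding j_def[symmetric] by auto
    have "\<omega> \<in> F j" unfolding F_def using P1 P3 by auto
    then show "\<omega> \<in> (\<Union>j\<in>{1..k}. F j)" using P1 P2 by auto
  qed
  define U where "U = (\<Union>k\<in>{1..n}. A k)"
  have UF: "(\<Union>j\<in>{1..n}. F j) = U"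
  proof
    show "(\<Union>j\<in>{1..n}. F j) \<subseteq> U" unfolding U_def using F_sub by blast
    show "U \<subseteq> (\<Union>j\<in>{1..n}. F j)" unfolding U_def using A_cover by fastforce
  qed
  have U_sets: "U \<in> sets (P x)" unfolding U_def using A_sets by auto
  have fin_P: "emeasure (P x) S \<noteq> \<infinity>" for S using measP[of x S] by simp
  have decomp: "measure (P x) (A k) = (\<Sum>j\<in>{1..k}. measure (P x) (F j \<inter> A k))" if k: "1 \<le> k" for k
  proof -
    have "(\<Union>j\<in>{1..k}. F j \<inter> A k) = A k" using A_cover[OF k] by blast
    moreover have "measure (P x) (\<Union>j\<in>{1..k}. F j \<inter> A k) = (\<Sum>j\<in>{1..k}. measure (P x) (F j \<inter> A k))"
    proof (rule measure_finite_Union)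
      show "disjoint_family_on (\<lambda>j. F j \<inter> A k) {1..k}"
      proof (unfold disjoint_family_on_def, intro ballI impI)
        fix m1 m2 assume "m1 \<in> {1..k}" "m2 \<in> {1..k}" "m1 \<noteq> m2"
        then show "(F m1 \<inter> A k) \<inter> (F m2 \<inter> A k) = {}" using F_disj[of m1 m2] by auto
      qed
    qed (use F_sets A_sets fin_P in auto)
    ultimately show ?thesis by simp
  qed
  have UFsum: "measure (P x) U = (\<Sum>j\<in>{1..n}. measure (P x) (F j))"
  proof -
    have "measure (P x) (\<Union>j\<in>{1..n}. F j) = (\<Sum>j\<in>{1..n}. measure (P x) (F j))"
    proof (rule measure_finite_Union)
      show "disjoint_family_on F {1..n}"
      proof (unfold disjoint_family_on_def, intro ballI impI)
        fix m1 m2 assume "m1 \<in> {1..n}" "m2 \<in> {1..n}" "m1 \<noteq> m2"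
        then show "F m1 \<inter> F m2 = {}" using F_disj[of m1 m2] by auto
      qed
    qed (use F_sets fin_P in auto)
    then show ?thesis using UF by simp
  qed
  define w where "w m = (if m = 0 then 1 else mB / (C * V (\<psi> (real m * h))))" for m :: nat
  have w0: "w m \<ge> 0" for m
  proof (cases "m = 0")
    case True then show ?thesis unfolding w_def by simp
  next
    case False
    then have "real m * h > 0" using h by simp
    then have "V (\<psi> (real m * h)) > 0" using V_pos psi_pos by blast
    then show ?thesis unfolding w_def using False mB0 Cpos by simp
  qed
  have FA: "measure (P x) (F j \<inter> A k) \<le> measure (P x) (F j) * w (k - j)" if jk: "j \<le> k" for j k
  proof (cases "j = k")
    case True
    then show ?thesis using F_sets by (simp add: w_def PX.finite_measure_mono)
  next
    case False
    then have jk': "j < k" using jk by auto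
    define s' where "s' = real (k - j) * h"
    have s': "s' > 0" unfolding s'_def using jk' h by auto
    have sk: "s j + s' = s k" unfolding s_def s'_def using jk by (simp add: of_nat_diff algebra_simps)
    have wk: "w (k - j) = mB / (C * V (\<psi> s'))" unfolding w_def s'_def using jk' by auto
    have mk: "emeasure (P x) (F j \<inter> {\<omega>\<in>\<Omega>. X (s j + s') \<omega> \<in> Some ` B})
        = (\<integral>\<^sup>+ \<omega>. indicator (F j) \<omega> * transD \<Omega> X P s' (Some ` B) (X (s j) \<omega>) \<partial>P x)"
      using s' s_pos[of j] Bborel F_nat[of j] by (intro markov_step[OF hunt]) auto
    have pw: "indicator (F j) \<omega> * transD \<Omega> X P s' (Some ` B) (X (s j) \<omega>) \<le> ennreal (w (k - j)) * indicator (F j) \<omega>" for \<omega>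
    proof (cases "\<omega> \<in> F j")
      case False then show ?thesis by simp
    next
      case True
      then have "\<omega> \<in> A j" using F_sub by auto
      then obtain y where y: "X (s j) \<omega> = Some y" "y \<in> B" unfolding A_def Ev_def by auto
      have td: "transD \<Omega> X P s' (Some ` B) (X (s j) \<omega>) = ennreal (measure (P y) (Ev s' B))"
        using y measP unfolding transD_def Ev_def by simp
      have "measure (P y) (Ev s' B) \<le> 1 / (C * V (\<psi> s')) * mB"
        unfolding mB_def using p_up_diag s' Cpos V_pos[OF psi_pos[OF s']]
        by (intro ev_upper[OF _ Bborel Bfin]) auto
      then have "measure (P y) (Ev s' B) \<le> w (k - j)" unfolding wk by simp
      then show ?thesis using td True by (simp add: ennreal_leI)
    qed
    have "ennreal (measure (P x) (F j \<inter> A k)) = emeasure (P x) (F j \<inter> {\<omega>\<in>\<Omega>. X (s j + s') \<omega> \<in> Some ` B})"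
      unfolding sk A_def Ev_def using measP by simp
    also have "\<dots> \<le> (\<integral>\<^sup>+ \<omega>. ennreal (w (k - j)) * indicator (F j) \<omega> \<partial>P x)"
      unfolding mk by (intro nn_integral_mono pw)
    also have "\<dots> = ennreal (w (k - j)) * emeasure (P x) (F j)"
      using F_sets by (intro nn_integral_cmult_indicator) auto
    also have "\<dots> = ennreal (measure (P x) (F j) * w (k - j))"
      using measP w0 by (simp add: ennreal_mult mult.commute)
    finally show ?thesis using w0 by (simp add: ennreal_le_iff)
  qed
  define a where "a = d1 / d4"
  have wb: "w m \<le> Q / C^2 * real m powr (-a)" if m: "m \<ge> 1" for m
  proof -
    have mh: "real m * h > 0" using h m by simp
    have Vm: "V (\<psi> (real m * h)) > 0" using V_pos psi_pos mh by blast
    have "w m = mB / (C * V (\<psi> (real m * h)))" unfolding w_def using m by simp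
    also have "\<dots> \<le> (V r / C) / (C * V (\<psi> (real m * h)))"
      using mB_up Vm Cpos by (intro divide_right_mono) auto
    also have "\<dots> = (1 / C^2) * (V r / V (\<psi> (real m * \<phi> r)))"
      unfolding h_def by (simp add: power2_eq_square)
    also have "\<dots> \<le> (1 / C^2) * (Q * real m powr (-a))"
      unfolding a_def using Q(2)[OF r m] Cpos by (intro mult_left_mono) auto
    finally show ?thesis by simp
  qed
  have Zb: "(\<Sum>m\<in>{1..n}. real m powr (-a)) \<le> Z"
    unfolding Zdef a_def using Zs by (intro sum_le_suminf) auto
  have QC: "Q / C^2 \<ge> 0" using Q Cpos by auto
  have wsum: "(\<Sum>k\<in>{j..n}. w (k - j)) \<le> W" for j
  proof (cases "j \<le> n")
    case False then show ?thesis using W1 by simp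
  next
    case True
    have ins: "{j..n} = insert j {j<..n}" using True by auto
    have "(\<Sum>k\<in>{j<..n}. w (k - j)) \<le> (\<Sum>k\<in>{j<..n}. Q / C^2 * real (k - j) powr (-a))"
      by (intro sum_mono wb) auto
    also have "\<dots> = (\<Sum>m\<in>(\<lambda>k. k - j) ` {j<..n}. Q / C^2 * real m powr (-a))"
      by (subst sum.reindex) (auto simp: inj_on_def)
    also have "\<dots> \<le> (\<Sum>m\<in>{1..n}. Q / C^2 * real m powr (-a))"
    proof (rule sum_mono2)
      show "finite {1..n}" by simp
      show "(\<lambda>k. k - j) ` {j<..n} \<subseteq> {1..n}" by auto
      fix b show "0 \<le> Q / C^2 * real b powr (-a)" using QC by (intro mult_nonneg_nonneg) auto
    qed
    also have "\<dots> = Q / C^2 * (\<Sum>m\<in>{1..n}. real m powr (-a))" by (simp add: sum_distrib_left)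
    also have "\<dots> \<le> Q / C^2 * Z" using Zb QC by (intro mult_left_mono) auto
    finally have "(\<Sum>k\<in>{j<..n}. w (k - j)) \<le> Q / C^2 * Z" .
    then show ?thesis unfolding ins Wdef by (simp add: w_def)
  qed
  have sw: "(\<Sum>k\<in>{1..n}. \<Sum>j\<in>{1..k}. g j k) = (\<Sum>j\<in>{1..n}. \<Sum>k\<in>{j..n}. g j k)" for g :: "nat \<Rightarrow> nat \<Rightarrow> real"
  proof -
    have "(\<Sum>k\<in>{1..n}. \<Sum>j\<in>{j. j \<in> {1..n} \<and> j \<le> k}. g j k) = (\<Sum>j\<in>{1..n}. \<Sum>k\<in>{k. k \<in> {1..n} \<and> j \<le> k}. g j k)"
      by (rule sum.swap_restrict) auto
    moreover have "(\<Sum>k\<in>{1..n}. \<Sum>j\<in>{j. j \<in> {1..n} \<and> j \<le> k}. g j k) = (\<Sum>k\<in>{1..n}. \<Sum>j\<in>{1..k}. g j k)"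
      by (intro sum.cong refl) auto
    moreover have "(\<Sum>j\<in>{1..n}. \<Sum>k\<in>{k. k \<in> {1..n} \<and> j \<le> k}. g j k) = (\<Sum>j\<in>{1..n}. \<Sum>k\<in>{j..n}. g j k)"
      by (intro sum.cong refl) auto
    ultimately show ?thesis by simp
  qed
  have "(\<Sum>k\<in>{1..n}. measure (P x) (A k)) = (\<Sum>k\<in>{1..n}. \<Sum>j\<in>{1..k}. measure (P x) (F j \<inter> A k))"
    using decomp by (intro sum.cong refl) auto
  also have "\<dots> \<le> (\<Sum>k\<in>{1..n}. \<Sum>j\<in>{1..k}. measure (P x) (F j) * w (k - j))"
    using FA by (intro sum_mono) auto
  also have "\<dots> = (\<Sum>j\<in>{1..n}. \<Sum>k\<in>{j..n}. measure (P x) (F j) * w (k - j))" by (rule sw)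
  also have "\<dots> = (\<Sum>j\<in>{1..n}. measure (P x) (F j) * (\<Sum>k\<in>{j..n}. w (k - j)))"
    by (simp add: sum_distrib_left)
  also have "\<dots> \<le> (\<Sum>j\<in>{1..n}. measure (P x) (F j) * W)"
    using wsum by (intro sum_mono mult_left_mono) auto
  also have "\<dots> = W * measure (P x) U" unfolding UFsum sum_distrib_left by (simp add: mult.commute)
  finally have S1: "(\<Sum>k\<in>{1..n}. measure (P x) (A k)) \<le> W * measure (P x) U" .
  have "(\<Sum>k\<in>{1..n}. a0) \<le> (\<Sum>k\<in>{1..n}. measure (P x) (A k))"
    using A_low by (intro sum_mono) auto
  then have S2: "real n * a0 \<le> W * measure (P x) U" using S1 by simp
  have U_hit: "U \<subseteq> hit_event \<Omega> X x0 r t \<theta>"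
  proof
    fix \<omega> assume "\<omega> \<in> U"
    then obtain k where k: "k \<in> {1..n}" "\<omega> \<in> A k" unfolding U_def by auto
    then obtain y where y: "\<omega> \<in> \<Omega>" "X (s k) \<omega> = Some y" "dist x0 y \<le> r"
      unfolding A_def Ev_def B_def by auto
    have "t < s k" "s k \<le> 2 * t" using s_gt s_le k by auto
    moreover have "2 * t \<le> \<theta> * t" using \<theta> tpos by (intro mult_right_mono) auto
    ultimately have sk: "t < s k" "s k \<le> \<theta> * t" by linarith+
    show "\<omega> \<in> hit_event \<Omega> X x0 r t \<theta>"
      unfolding hit_event_def using y sk by (auto simp: dist_commute intro!: exI[of _ "s k"])
  qed
  have UR: "measure (P x) U \<le> R_hit \<Omega> X P x0 x r t \<theta>"
    unfolding R_hit_def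
  proof (rule cSup_upper)
    show "measure (P x) U \<in> {measure (P x) A |A. A \<in> sets (P x) \<and> A \<subseteq> hit_event \<Omega> X x0 r t \<theta>}"
      using U_sets U_hit by auto
    show "bdd_above {measure (P x) A |A. A \<in> sets (P x) \<and> A \<subseteq> hit_event \<Omega> X x0 r t \<theta>}"
      by (rule bdd_aboveI[of _ 1]) (auto simp: measP_le1)
  qed
  have cpos: "C / (G * K * V \<rho>) > 0" using Cpos G1 K Vr by auto
  have L1: "(t / h / 2) * (C / (G * K * V \<rho>)) * (cmu * V r) \<le> real n * a0"
    unfolding a0_def
  proof -
    have h1: "(t / h / 2) * (C / (G * K * V \<rho>)) \<le> real n * (C / (G * K * V \<rho>))"
      using nge cpos by (intro mult_right_mono) auto
    have "((t / h / 2) * (C / (G * K * V \<rho>))) * (cmu * V r) \<le> (real n * (C / (G * K * V \<rho>))) * mB"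
      using cpos cmu Vr by (intro mult_mono[OF h1 mB_low] mult_nonneg_nonneg) auto
    then show "(t / h / 2) * (C / (G * K * V \<rho>)) * (cmu * V r) \<le> real n * (C / (G * K * V \<rho>) * mB)"
      by (simp only: mult.assoc)
  qed
  have eq: "C * cmu / (2 * G * K * W) * (V r / \<phi> r) * (t / V (\<psi> t))
      = ((t / h / 2) * (C / (G * K * V \<rho>)) * (cmu * V r)) / W"
    unfolding h_def \<rho>_def by (simp add: field_simps)
  have W0: "W > 0" using W1 by simp
  have X0: "(t / h / 2) * (C / (G * K * V \<rho>)) * (cmu * V r) \<le> measure (P x) U * W"
    using L1 S2 by (simp add: mult.commute)
  have "((t / h / 2) * (C / (G * K * V \<rho>)) * (cmu * V r)) / W \<le> measure (P x) U"
    unfolding pos_divide_le_eq[OF W0] by (rule X0)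
  then show ?thesis unfolding eq using UR by linarith
qed

end


theorem corollary4p14:
  fixes \<mu> :: "'a::metric_space measure"
    and \<Omega> :: "'w set" and X :: "real \<Rightarrow> 'w \<Rightarrow> 'a option" and P :: "'a \<Rightarrow> 'w measure"
    and p :: "real \<Rightarrow> 'a \<Rightarrow> 'a \<Rightarrow> real"
    and V \<phi> :: "real \<Rightarrow> real"
    and c1 c2 c3 c4 d1 d2 d3 d4 :: real
  assumes loc_compact: "locally compact (UNIV :: 'a set)"
    and separable: "\<exists>D :: 'a set. countable D \<and> closure D = UNIV"
    and mu_borel: "sets \<mu> = sets borel"
    and mu_radon: "\<And>K. compact K \<Longrightarrow> emeasure \<mu> K < \<infinity>"
    and mu_full_support: "\<And>U. open U \<Longrightarrow> U \<noteq> {} \<Longrightarrow> emeasure \<mu> U > 0"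
    and hunt: "hunt_process \<Omega> X P"
    and hk: "heat_kernel_of \<Omega> X P \<mu> p"
    and dirichlet: "regular_no_killing \<mu> p"
    and V_pos: "\<And>r. r > 0 \<Longrightarrow> V r > 0"
    and V_mono: "mono_on {0<..} V"
    and phi_mono: "strict_mono_on {0<..} \<phi>"
    and phi_onto: "\<phi> ` {0<..} = {0<..}"
    and consts_pos: "c1 > 0" "c2 > 0" "c3 > 0" "c4 > 0" "d1 > 0" "d2 > 0" "d3 > 0" "d4 > 0"
    and V_scale: "\<And>r R. 0 < r \<Longrightarrow> r < R \<Longrightarrow>
                    c1 * (R / r) powr d1 \<le> V R / V r \<and> V R / V r \<le> c2 * (R / r) powr d2"
    and phi_scale: "\<And>r R. 0 < r \<Longrightarrow> r < R \<Longrightarrow>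
                    c3 * (R / r) powr d3 \<le> \<phi> R / \<phi> r \<and> \<phi> R / \<phi> r \<le> c4 * (R / r) powr d4"
    and hk_bounds: "\<exists>C > 0. \<forall>t > 0. \<forall>x y.
                    C * hk_profile V \<phi> (the_inv_into {0<..} \<phi>) t x y \<le> p t x y \<and>
                    p t x y \<le> (1 / C) * hk_profile V \<phi> (the_inv_into {0<..} \<phi>) t x y"
    and d1_gt_d4: "d1 > d4"
    and balls_rel_compact: "\<And>(x::'a) r. compact (closure (ball x r))"
  shows "\<exists>C1 > 0. \<exists>C2 > 0. \<forall>r > 0. \<forall>t \<ge> \<phi> r. \<forall>\<theta>. \<theta> > 1 \<longrightarrow> \<theta> \<ge> C1 \<longrightarrow>
           (\<forall>x x0. dist x x0 \<le> r \<longrightarrow>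
              R_hit \<Omega> X P x0 x r t \<theta> \<ge>
                C2 * (V r / \<phi> r) * (t / V (the_inv_into {0<..} \<phi> t)))"
proof -
  obtain C where C: "C > 0" "\<And>t x y. t > 0 \<Longrightarrow> C * hk_profile V \<phi> (the_inv_into {0<..} \<phi>) t x y \<le> p t x y"
    "\<And>t x y. t > 0 \<Longrightarrow> p t x y \<le> (1 / C) * hk_profile V \<phi> (the_inv_into {0<..} \<phi>) t x y"
    using hk_bounds by blast
  interpret S: setting V \<phi> c1 c2 c3 c4 d1 d2 d3 d4 \<mu> \<Omega> X P p C
    by (unfold_locales) (use assms C in auto)
  obtain cmu where cmu: "cmu > 0" "\<And>x R. R > 0 \<Longrightarrow> cmu * V R \<le> measure \<mu> (ball x R)"
    using S.vol_lower by blast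
  obtain K where K: "K > 0" "\<And>t t'. t > 0 \<Longrightarrow> t \<le> t' \<Longrightarrow> t' \<le> 2 * t \<Longrightarrow> V (S.\<psi> t') \<le> K * V (S.\<psi> t)"
    using S.psi_double by blast
  obtain Q where Q: "Q \<ge> 1" "\<And>r m. r > 0 \<Longrightarrow> m \<ge> 1 \<Longrightarrow> V r / V (S.\<psi> (real m * \<phi> r)) \<le> Q * real m powr (-(d1/d4))"
    using S.sum_decay by blast
  have Zs: "summable (\<lambda>m::nat. real m powr (-(d1/d4)))"
    unfolding summable_real_powr_iff using d1_gt_d4 consts_pos by (simp add: field_simps)
  define Z where "Z = suminf (\<lambda>m::nat. real m powr (-(d1/d4)))"
  define G where "G = max 1 (c2 * 2 powr d2 * (c4 * 2 powr d4))"
  define W where "W = 1 + Q / C^2 * Z"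
  have Z0: "Z \<ge> 0" unfolding Z_def using Zs by (intro suminf_nonneg) auto
  have W1: "W \<ge> 1" unfolding W_def using Q Z0 C by auto
  have G1: "G \<ge> 1" unfolding G_def by auto
  have C2pos: "C * cmu / (2 * G * K * W) > 0" using C cmu K W1 G1 by auto
  have main: "\<forall>r > 0. \<forall>t \<ge> \<phi> r. \<forall>\<theta>. \<theta> > 1 \<longrightarrow> \<theta> \<ge> 2 \<longrightarrow>
           (\<forall>x x0. dist x x0 \<le> r \<longrightarrow>
              R_hit \<Omega> X P x0 x r t \<theta> \<ge>
                C * cmu / (2 * G * K * W) * (V r / \<phi> r) * (t / V (the_inv_into {0<..} \<phi> t)))"
    using S.key_bound[OF _ _ _ _ cmu K Q Zs Z_def G_def W_def] unfolding S.\<psi>_def by blast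
  show ?thesis
    apply (rule exI[of _ 2])
    apply (rule conjI)
     apply simp
    apply (rule exI[of _ "C * cmu / (2 * G * K * W)"])
    using C2pos main by blast
qed


end
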